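(* Let $(X,d)$ be a compact doubling metric space with $\operatorname{diam}(X,d)=1/2$ and $\mathcal S$ a hyperbolic filling with parameters $a\ge\lambda\ge6$. Let $\rho:\mathcal S\to(0,\infty)$ satisfy (H1), (H2), (H4) (exponent $p$) and let $C\ge\eta_-^{-p}$. Let $\mu_0$ be the unit mass on $\mathcal S_0=\{v_0\}$ and let $(\mu_k)_{k\ge0}$ be probability mass functions, $\mu_k$ on $\mathcal S_k$, such that for every $k$: $(\mu_k,\mu_{k+1})$ is $(C,\pi)$-compatible, $\mu_{k+1}$ is $(C,\pi)$-balanced, and there is a probability measure on $X\times X$ with marginals $\tilde\mu_k$ and $\tilde\mu_{k+1}$ giving zero mass to $\{(x_1,x_2):d(x_1,x_2)\ge(1+2\lambda a^{-1})a^{-k}\}$, where $\tilde\mu_k=\sum_{v\in\mathcal S_k}\mu_k(v)\delta_{\pi_1(v)}$. Then any subsequential weak limit $\mu$ of $(\tilde\mu_k)_{k\in\mathbb N}$ is a doubling measure on $(X,d)$.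
   Context: Hyperbolic filling: $X_0\subset X_1\subset\cdots$ increasing, $X_n$ maximal $a^{-n}$-separated in $X$ ($X_0=\{x_0\}$); $\mathcal S_n=\{(x,n):x\in X_n\}$, $\mathcal S=\bigcup_n\mathcal S_n$, $\pi_1(x,n)=x$, $v_0=(x_0,0)$. Each $(x,n)$, $n\ge1$, has a fixed parent $(y,n-1)$ with $d(x,y)=\min_{z\in X_{n-1}}d(x,z)$; $\mathcal D_n(v)$ = descendants of $v$ in $\mathcal S_n$; genealogy $g(v)=(v_0,\dots,v_k=v)$. $D_2$: graph distance for the graph with edges vertex–parent and horizontal edges between distinct $(x,n),(y,n)$ with $B(x,\lambda a^{-n})\cap B(y,\lambda a^{-n})\ne\emptyset$. $\pi(v)=\prod_{w\in g(v)}\rho(w)$. (H1) $0<\eta_-\le\rho\le\eta_+<1$. (H2) $\pi(v)\le K_0\pi(w)$ for horizontally adjacent $v,w$, some $K_0\ge1$. (H4) $\sum_{w\in\mathcal D_n(v)}\pi(w)^p\le\pi(v)^p$ for all $v\in\mathcal S_m$, $n>m$. $f:\mathcal S_k\to(0,\infty)$ is $(C,\pi)$-balanced if $f(u)/\pi(u)^p\le C^2f(v)/\pi(v)^p$ for all $u,v\in\mathcal S_k$ with $D_2(u,v)=1$. $(f_0,f_1)$ ($f_0$ on $\mathcal S_k$, $f_1$ on $\mathcal S_{k+1}$) is $(C,\pi)$-compatible if $f_0(u)/\pi(u)^p\le f_1(v)/\pi(v)^p\le Cf_0(u)/\pi(u)^p$ whenever $u$ is the parent of $v$. A measure $\mu$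 is doubling on $(X,d)$ if $\mu\ne0$ and $\mu(B(x,2r))\le C_D\mu(B(x,r))$ for all $x$, $r>0$. *)

theory Defs
  imports "HOL-Probability.Probability"
begin

text \<open>The compact metric space (X,d) is the whole type 'a (X = UNIV), d = dist.
  Vertices of the hyperbolic filling are pairs (x,n) with x in Xs n.\<close>

definition doubling_metric_space :: "'a::metric_space itself \<Rightarrow> bool" where
  "doubling_metric_space _ \<longleftrightarrow>
     (\<exists>N::nat. \<forall>(x::'a) r. r > 0 \<longrightarrow>
        (\<exists>F. finite F \<and> card F \<le> N \<and> ball x r \<subseteq> (\<Union>y\<in>F. ball y (r/2))))"

definition separated :: "real \<Rightarrow> 'a::metric_space set \<Rightarrow> bool" where
  "separated \<epsilon> Y \<longleftrightarrow> (\<forall>x\<in>Y. \<forall>y\<in>Y. x \<noteq> y \<longrightarrow> dist x y \<ge> \<epsilon>)"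

definition maximal_separated :: "real \<Rightarrow> 'a::metric_space set \<Rightarrow> bool" where
  "maximal_separated \<epsilon> Y \<longleftrightarrow> separated \<epsilon> Y \<and>
     (\<forall>Z. Y \<subseteq> Z \<and> separated \<epsilon> Z \<longrightarrow> Z = Y)"

definition hyperbolic_filling ::
  "real \<Rightarrow> ('a::metric_space) \<Rightarrow> (nat \<Rightarrow> 'a set) \<Rightarrow> ('a \<times> nat \<Rightarrow> 'a \<times> nat) \<Rightarrow> bool" where
  "hyperbolic_filling a x0 Xs par \<longleftrightarrow>
     (\<forall>n. Xs n \<subseteq> Xs (Suc n)) \<and> Xs 0 = {x0} \<and>
     (\<forall>n. maximal_separated (a powr (- real n)) (Xs n)) \<and>
     (\<forall>n x. x \<in> Xs (Suc n) \<longrightarrow>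
        snd (par (x, Suc n)) = n \<and> fst (par (x, Suc n)) \<in> Xs n \<and>
        (\<forall>z\<in>Xs n. dist x (fst (par (x, Suc n))) \<le> dist x z))"

definition level :: "(nat \<Rightarrow> 'a set) \<Rightarrow> nat \<Rightarrow> ('a \<times> nat) set" where
  "level Xs n = (\<lambda>x. (x, n)) ` Xs n"

definition vertices :: "(nat \<Rightarrow> 'a set) \<Rightarrow> ('a \<times> nat) set" where
  "vertices Xs = (\<Union>n. level Xs n)"

definition hadj :: "real \<Rightarrow> real \<Rightarrow> (nat \<Rightarrow> 'a::metric_space set) \<Rightarrow> 'a \<times> nat \<Rightarrow> 'a \<times> nat \<Rightarrow> bool" where
  "hadj a lam Xs u v \<longleftrightarrow> u \<in> vertices Xs \<and> v \<in> vertices Xs \<and> snd u = snd v \<and> u \<noteq> v \<and>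
     ball (fst u) (lam * a powr (- real (snd u))) \<inter> ball (fst v) (lam * a powr (- real (snd v))) \<noteq> {}"

definition filling_edges ::
  "real \<Rightarrow> real \<Rightarrow> (nat \<Rightarrow> 'a::metric_space set) \<Rightarrow> ('a \<times> nat \<Rightarrow> 'a \<times> nat) \<Rightarrow> (('a \<times> nat) \<times> ('a \<times> nat)) set" where
  "filling_edges a lam Xs par =
     {(v, par v) | v. v \<in> vertices Xs \<and> snd v \<ge> 1} \<union>
     {(par v, v) | v. v \<in> vertices Xs \<and> snd v \<ge> 1} \<union>
     {(u, v). hadj a lam Xs u v}"

definition D2 ::
  "real \<Rightarrow> real \<Rightarrow> (nat \<Rightarrow> 'a::metric_space set) \<Rightarrow> ('a \<times> nat \<Rightarrow> 'a \<times> nat) \<Rightarrow> 'a \<times> nat \<Rightarrow> 'a \<times> nat \<Rightarrow> nat" where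
  "D2 a lam Xs par u v = (LEAST n. (u, v) \<in> (filling_edges a lam Xs par) ^^ n)"

definition genealogy :: "('a \<times> nat \<Rightarrow> 'a \<times> nat) \<Rightarrow> 'a \<times> nat \<Rightarrow> ('a \<times> nat) list" where
  "genealogy par v = map (\<lambda>i. (par ^^ (snd v - i)) v) [0..<Suc (snd v)]"

definition piw :: "('a \<times> nat \<Rightarrow> real) \<Rightarrow> ('a \<times> nat \<Rightarrow> 'a \<times> nat) \<Rightarrow> 'a \<times> nat \<Rightarrow> real" where
  "piw rho par v = prod_list (map rho (genealogy par v))"

definition descendants ::
  "(nat \<Rightarrow> 'a set) \<Rightarrow> ('a \<times> nat \<Rightarrow> 'a \<times> nat) \<Rightarrow> nat \<Rightarrow> 'a \<times> nat \<Rightarrow> ('a \<times> nat) set" where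
  "descendants Xs par n v = {w \<in> level Xs n. (par ^^ (n - snd v)) w = v}"

definition balanced ::
  "real \<Rightarrow> real \<Rightarrow> (nat \<Rightarrow> 'a::metric_space set) \<Rightarrow> ('a \<times> nat \<Rightarrow> 'a \<times> nat) \<Rightarrow>
   ('a \<times> nat \<Rightarrow> real) \<Rightarrow> real \<Rightarrow> real \<Rightarrow> nat \<Rightarrow> ('a \<times> nat \<Rightarrow> real) \<Rightarrow> bool" where
  "balanced a lam Xs par rho p C k f \<longleftrightarrow>
     (\<forall>u\<in>level Xs k. f u > 0) \<and>
     (\<forall>u\<in>level Xs k. \<forall>v\<in>level Xs k. D2 a lam Xs par u v = 1 \<longrightarrow>
        f u / piw rho par u powr p \<le> C\<^sup>2 * (f v / piw rho par v powr p))"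

definition compatible ::
  "(nat \<Rightarrow> 'a set) \<Rightarrow> ('a \<times> nat \<Rightarrow> 'a \<times> nat) \<Rightarrow>
   ('a \<times> nat \<Rightarrow> real) \<Rightarrow> real \<Rightarrow> real \<Rightarrow> nat \<Rightarrow> ('a \<times> nat \<Rightarrow> real) \<Rightarrow> ('a \<times> nat \<Rightarrow> real) \<Rightarrow> bool" where
  "compatible Xs par rho p C k f0 f1 \<longleftrightarrow>
     (\<forall>u\<in>level Xs k. f0 u > 0) \<and> (\<forall>v\<in>level Xs (Suc k). f1 v > 0) \<and>
     (\<forall>v\<in>level Xs (Suc k). \<forall>u\<in>level Xs k. u = par v \<longrightarrow>
        f0 u / piw rho par u powr p \<le> f1 v / piw rho par v powr p \<and>
        f1 v / piw rho par v powr p \<le> C * (f0 u / piw rho par u powr p))"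

text \<open>The push-forward measure tilde mu_k = sum_v mu_k(v) delta_{pi_1(v)} on the Borel sets.\<close>
definition push_measure :: "(nat \<Rightarrow> 'a::topological_space set) \<Rightarrow> nat \<Rightarrow> ('a \<times> nat \<Rightarrow> real) \<Rightarrow> 'a measure" where
  "push_measure Xs k f = distr (density (count_space (level Xs k)) (\<lambda>v. ennreal (f v))) borel fst"

definition weak_limit :: "('a::metric_space) measure \<Rightarrow> (nat \<Rightarrow> 'a measure) \<Rightarrow> bool" where
  "weak_limit M Ms \<longleftrightarrow> sets M = sets borel \<and> finite_measure M \<and>
     (\<forall>f::'a \<Rightarrow> real. continuous_on UNIV f \<longrightarrow>
        (\<lambda>j. integral\<^sup>L (Ms j) f) \<longlonglongrightarrow> integral\<^sup>L M f)"

definition doubling_measure :: "('a::metric_space) measure \<Rightarrow> bool" where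
  "doubling_measure M \<longleftrightarrow> emeasure M (space M) \<noteq> 0 \<and>
     (\<exists>CD. \<forall>x r. r > 0 \<longrightarrow> measure M (ball x (2 * r)) \<le> CD * measure M (ball x r))"

end

theory Submission
  imports Defs
begin

definition nuL :: "('a \<times> nat) set \<Rightarrow> ('a \<times> nat \<Rightarrow> real) \<Rightarrow> 'a set \<Rightarrow> real" where
  "nuL L f A = sum f {v\<in>L. fst v \<in> A}"

lemma powr_to_pow: "(a::real) > 0 \<Longrightarrow> a powr (- real n) = (1/a)^n"
  by (simp add: powr_minus powr_realpow divide_inverse power_inverse)

lemma max_sep_dense:
  assumes "maximal_separated e Y" "e > 0"
  shows "\<exists>z\<in>Y. dist y z < e"
proof (cases "y \<in> Y")
  case True then show ?thesis using assms(2) by (intro bexI[of _ y]) auto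
next
  case False
  have "insert y Y \<noteq> Y" using False by auto
  with assms(1) have ns: "\<not> separated e (insert y Y)"
    unfolding maximal_separated_def by blast
  have sY: "separated e Y" using assms(1) unfolding maximal_separated_def by blast
  from ns obtain p q where pq: "p \<in> insert y Y" "q \<in> insert y Y" "p \<noteq> q" "dist p q < e"
    unfolding separated_def by (auto simp: not_le)
  show ?thesis
  proof (cases "p = y")
    case True
    then have "q \<in> Y" using pq by auto
    then show ?thesis using pq True by auto
  next
    case False
    then have "p \<in> Y" using pq by auto
    show ?thesis
    proof (cases "q = y")
      case True then show ?thesis using pq \<open>p \<in> Y\<close> by (auto simp: dist_commute)
    next
      case False
      then have "q \<in> Y" using pq by auto
      then have "dist p q \<ge> e" using sY \<open>p \<in> Y\<close> pq(3) unfolding separated_def by blast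
      then show ?thesis using pq by auto
    qed
  qed
qed

lemma level_mem: "v \<in> level Xs n \<longleftrightarrow> snd v = n \<and> fst v \<in> Xs n"
  unfolding level_def by (cases v) auto

lemma level_vertices: "v \<in> level Xs n \<Longrightarrow> v \<in> vertices Xs"
  unfolding vertices_def by auto

lemma par_level:
  assumes "hyperbolic_filling a x0 Xs par" "v \<in> level Xs (Suc n)"
  shows "par v \<in> level Xs n"
proof -
  obtain x where v: "v = (x, Suc n)" "x \<in> Xs (Suc n)" using assms(2) unfolding level_def by auto
  then show ?thesis using assms(1) unfolding hyperbolic_filling_def level_mem by auto
qed

lemma par_dist:
  assumes "hyperbolic_filling a x0 Xs par" "v \<in> level Xs (Suc n)" "a > 0"
  shows "dist (fst v) (fst (par v)) < (1/a)^n"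
proof -
  obtain x where v: "v = (x, Suc n)" "x \<in> Xs (Suc n)" using assms(2) unfolding level_def by auto
  have ms: "maximal_separated (a powr (- real n)) (Xs n)" using assms(1) unfolding hyperbolic_filling_def by blast
  obtain z where z: "z \<in> Xs n" "dist x z < a powr (- real n)"
    using max_sep_dense[OF ms] assms(3) by force
  have "dist x (fst (par (x, Suc n))) \<le> dist x z"
    using assms(1) v z unfolding hyperbolic_filling_def by blast
  then show ?thesis using z v powr_to_pow[OF assms(3)] by auto
qed

lemma level0: "hyperbolic_filling a x0 Xs par \<Longrightarrow> level Xs 0 = {(x0, 0)}"
  unfolding hyperbolic_filling_def level_def by auto

lemma genealogy_Suc:
  assumes "hyperbolic_filling a x0 Xs par" "v \<in> level Xs (Suc n)"
  shows "genealogy par v = genealogy par (par v) @ [v]"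
proof -
  have sv: "snd v = Suc n" using assms(2) by (simp add: level_mem)
  have spv: "snd (par v) = n" using par_level[OF assms] by (simp add: level_mem)
  have "genealogy par v = map (\<lambda>i. (par ^^ (Suc n - i)) v) ([0..<Suc n] @ [Suc n])"
    unfolding genealogy_def sv by simp
  also have "\<dots> = map (\<lambda>i. (par ^^ (n - i)) (par v)) [0..<Suc n] @ [v]"
  proof -
    have "map (\<lambda>i. (par ^^ (Suc n - i)) v) [0..<Suc n] = map (\<lambda>i. (par ^^ (n - i)) (par v)) [0..<Suc n]"
    proof (rule map_cong[OF refl])
      fix i assume "i \<in> set [0..<Suc n]"
      then have "Suc n - i = Suc (n - i)" by auto
      then show "(par ^^ (Suc n - i)) v = (par ^^ (n - i)) (par v)"
        by (simp only: funpow_Suc_right comp_def)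
    qed
    then show ?thesis by simp
  qed
  also have "\<dots> = genealogy par (par v) @ [v]" unfolding genealogy_def spv by simp
  finally show ?thesis .
qed

lemma piw_Suc:
  assumes "hyperbolic_filling a x0 Xs par" "v \<in> level Xs (Suc n)"
  shows "piw rho par v = piw rho par (par v) * rho v"
  unfolding piw_def genealogy_Suc[OF assms] by simp

lemma piw_pos:
  assumes "hyperbolic_filling a x0 Xs par" "\<forall>v\<in>vertices Xs. 0 < rho v"
  shows "v \<in> level Xs n \<Longrightarrow> piw rho par v > 0"
proof (induction n arbitrary: v)
  case 0
  then have "snd v = 0" by (simp add: level_mem)
  then have "genealogy par v = [v]" unfolding genealogy_def by simp
  then show ?case using assms(2) level_vertices[OF 0] unfolding piw_def by simp
next
  case (Suc n)
  show ?case using piw_Suc[OF assms(1) Suc.prems] Suc.IH[OF par_level[OF assms(1) Suc.prems]]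
      assms(2) level_vertices[OF Suc.prems] by simp
qed

lemma vert_bounds:
  assumes fil: "hyperbolic_filling a x0 Xs par"
    and em: "0 < eta_m" and ep: "eta_p < 1"
    and rb: "\<forall>v\<in>vertices Xs. eta_m \<le> rho v \<and> rho v \<le> eta_p"
    and pp: "0 < p" and Cg: "C \<ge> eta_m powr (- p)"
    and cp: "compatible Xs par rho p C k (mu k) (mu (Suc k))"
    and v: "v \<in> level Xs (Suc k)"
  shows "eta_m powr p * mu k (par v) \<le> mu (Suc k) v \<and> mu (Suc k) v \<le> C * mu k (par v)"
proof -
  have rpos: "\<forall>v\<in>vertices Xs. 0 < rho v" using rb em by force
  define u where "u = par v"
  have u: "u \<in> level Xs k" using par_level[OF fil v] u_def by simp
  have pu: "piw rho par u > 0" using piw_pos[OF fil rpos u] .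
  have rv: "eta_m \<le> rho v" "rho v \<le> eta_p" using rb level_vertices[OF v] by auto
  have rv0: "rho v > 0" using rv em by linarith
  have pv: "piw rho par v = piw rho par u * rho v" using piw_Suc[OF fil v] u_def by simp
  have pvp: "piw rho par v powr p = piw rho par u powr p * rho v powr p"
    using pv pu rv0 by (simp add: powr_mult)
  have mu_pos: "mu k u > 0" using cp u unfolding compatible_def by blast
  have ineq: "mu k u / piw rho par u powr p \<le> mu (Suc k) v / piw rho par v powr p"
      "mu (Suc k) v / piw rho par v powr p \<le> C * (mu k u / piw rho par u powr p)"
    using cp u v unfolding compatible_def u_def by blast+
  have A: "piw rho par u powr p > 0" "rho v powr p > 0" using pu rv0 by auto
  have low: "mu k u * rho v powr p \<le> mu (Suc k) v"
    using ineq(1) A unfolding pvp by (simp add: field_simps)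
  have up: "mu (Suc k) v \<le> C * mu k u * rho v powr p"
    using ineq(2) A unfolding pvp by (simp add: field_simps)
  have r1: "rho v powr p \<le> 1" using rv ep rv0 pp
    by (intro powr_le1) auto
  have r2: "eta_m powr p \<le> rho v powr p" using rv em pp by (simp add: powr_mono2)
  have C0: "C \<ge> 0" using Cg by (meson order_trans powr_ge_zero)
  have "eta_m powr p * mu k u \<le> mu k u * rho v powr p" using r2 mu_pos by (simp add: mult.commute)
  moreover have "C * mu k u * rho v powr p \<le> C * mu k u" using r1 C0 mu_pos
    by (simp add: mult_left_le)
  ultimately show ?thesis using low up u_def by auto
qed

lemma D2_one:
  assumes "hadj a lam Xs u v"
  shows "D2 a lam Xs par u v = 1"
proof -
  have E: "(u, v) \<in> filling_edges a lam Xs par" using assms unfolding filling_edges_def by auto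
  have ne: "u \<noteq> v" using assms unfolding hadj_def by auto
  show ?thesis unfolding D2_def
  proof (rule Least_equality)
    show "(u, v) \<in> filling_edges a lam Xs par ^^ 1" using E by simp
    fix n assume "(u, v) \<in> filling_edges a lam Xs par ^^ n"
    then show "1 \<le> n" using ne by (cases n) auto
  qed
qed

lemma horiz_bound:
  assumes fil: "hyperbolic_filling a x0 Xs par"
    and em: "0 < eta_m"
    and rb: "\<forall>v\<in>vertices Xs. eta_m \<le> rho v \<and> rho v \<le> eta_p"
    and pp: "0 < p"
    and H2: "\<forall>v w. hadj a lam Xs v w \<longrightarrow> piw rho par v \<le> K0 * piw rho par w"
    and bl: "balanced a lam Xs par rho p C (Suc k) (mu (Suc k))"
    and u: "u \<in> level Xs (Suc k)" and v: "v \<in> level Xs (Suc k)"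
    and h: "hadj a lam Xs u v"
  shows "mu (Suc k) u \<le> C^2 * K0 powr p * mu (Suc k) v"
proof -
  have rpos: "\<forall>v\<in>vertices Xs. 0 < rho v" using rb em by force
  have pu: "piw rho par u > 0" using piw_pos[OF fil rpos u] .
  have pv: "piw rho par v > 0" using piw_pos[OF fil rpos v] .
  have b: "mu (Suc k) u / piw rho par u powr p \<le> C\<^sup>2 * (mu (Suc k) v / piw rho par v powr p)"
    using bl u v D2_one[OF h] unfolding balanced_def by blast
  have muv: "mu (Suc k) v > 0" "mu (Suc k) u > 0" using bl u v unfolding balanced_def by auto
  have K: "piw rho par u \<le> K0 * piw rho par v" using H2 h by blast
  have K0p: "K0 > 0" 
  proof (rule ccontr)
    assume "\<not> K0 > 0"
    then have "K0 * piw rho par v \<le> 0" using pv by (simp add: mult_nonpos_nonneg)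
    then show False using K pu by linarith
  qed
  have Kp: "piw rho par u powr p \<le> K0 powr p * piw rho par v powr p"
    using powr_mono2[of p "piw rho par u" "K0 * piw rho par v"] K pu pv pp K0p
    by (simp add: powr_mult)
  have "mu (Suc k) u \<le> C\<^sup>2 * (mu (Suc k) v / piw rho par v powr p) * piw rho par u powr p"
    using b pu by (simp add: field_simps)
  also have "\<dots> \<le> C\<^sup>2 * (mu (Suc k) v / piw rho par v powr p) * (K0 powr p * piw rho par v powr p)"
    by (rule mult_left_mono[OF Kp]) (use muv pv in auto)
  also have "\<dots> = C^2 * K0 powr p * mu (Suc k) v" using pv by (simp add: field_simps)
  finally show ?thesis .
qed

lemma anc_bounds:
  fixes mu :: "nat \<Rightarrow> 'a::metric_space \<times> nat \<Rightarrow> real" and C e a :: real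
  assumes fil: "hyperbolic_filling a x0 Xs par" and a6: "a \<ge> 6"
    and vb: "\<forall>k v. v \<in> level Xs (Suc k) \<longrightarrow> e * mu k (par v) \<le> mu (Suc k) v \<and> mu (Suc k) v \<le> C * mu k (par v)"
    and C0: "C \<ge> 0" and e0: "e \<ge> 0"
  shows "\<forall>m v. v \<in> level Xs (m + j) \<longrightarrow> (par ^^ j) v \<in> level Xs m \<and>
     dist (fst v) (fst ((par ^^ j) v)) \<le> 6/5 * (1/a)^m \<and>
     mu (m + j) v \<le> C^j * mu m ((par ^^ j) v) \<and> e^j * mu m ((par ^^ j) v) \<le> mu (m + j) v"
proof (induction j)
  case 0
  then show ?case using a6 by simp
next
  case (Suc j)
  show ?case
  proof (intro allI impI)
    fix m v assume v: "v \<in> level Xs (m + Suc j)"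
    then have v': "v \<in> level Xs (Suc m + j)" by simp
    define w where "w = (par ^^ j) v"
    have IH: "w \<in> level Xs (Suc m)" "dist (fst v) (fst w) \<le> 6/5 * (1/a)^(Suc m)"
      "mu (Suc m + j) v \<le> C^j * mu (Suc m) w" "e^j * mu (Suc m) w \<le> mu (Suc m + j) v"
      using Suc.IH v' unfolding w_def by blast+
    have eq: "(par ^^ Suc j) v = par w" unfolding w_def by simp
    have pw: "par w \<in> level Xs m" using par_level[OF fil IH(1)] .
    have dpw: "dist (fst w) (fst (par w)) < (1/a)^m" using par_dist[OF fil IH(1)] a6 by simp
    have t: "(1/a)^(Suc m) \<le> 1/6 * (1/a)^m"
    proof -
      have h: "1/a \<le> 1/6" using a6 by (simp add: field_simps)
      have "(1/a)^(Suc m) = (1/a) * (1/a)^m" by simp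
      also have "\<dots> \<le> 1/6 * (1/a)^m" by (rule mult_right_mono[OF h]) (use a6 in simp)
      finally show ?thesis .
    qed
    have "dist (fst v) (fst (par w)) \<le> dist (fst v) (fst w) + dist (fst w) (fst (par w))"
      by (rule dist_triangle)
    also have "\<dots> \<le> 6/5 * (1/a)^m" using IH(2) dpw t by linarith
    finally have d: "dist (fst v) (fst (par w)) \<le> 6/5 * (1/a)^m" .
    have vbw: "e * mu m (par w) \<le> mu (Suc m) w" "mu (Suc m) w \<le> C * mu m (par w)" using vb IH(1) by blast+
    have up: "mu (m + Suc j) v \<le> C^(Suc j) * mu m (par w)"
    proof -
      have "mu (m + Suc j) v \<le> C^j * mu (Suc m) w" using IH(3) by simp
      also have "\<dots> \<le> C^j * (C * mu m (par w))" using vbw(2) C0 by (simp add: mult_left_mono)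
      finally show ?thesis by (simp add: algebra_simps)
    qed
    have low: "e^(Suc j) * mu m (par w) \<le> mu (m + Suc j) v"
    proof -
      have "e^(Suc j) * mu m (par w) = e^j * (e * mu m (par w))" by (simp add: mult.assoc)
      also have "\<dots> \<le> e^j * mu (Suc m) w" using vbw(1) e0 by (simp add: mult_left_mono)
      also have "\<dots> \<le> mu (m + Suc j) v" using IH(4) by simp
      finally show ?thesis .
    qed
    show "(par ^^ Suc j) v \<in> level Xs m \<and> dist (fst v) (fst ((par ^^ Suc j) v)) \<le> 6/5 * (1/a)^m \<and>
       mu (m + Suc j) v \<le> C^Suc j * mu m ((par ^^ Suc j) v) \<and> e^Suc j * mu m ((par ^^ Suc j) v) \<le> mu (m + Suc j) v"
      unfolding eq using pw d up low by blast
  qed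
qed

lemma compare_level:
  fixes mu :: "nat \<Rightarrow> 'a::metric_space \<times> nat \<Rightarrow> real" and C e a H R lam :: real
  assumes fil: "hyperbolic_filling a x0 Xs par" and a6: "a \<ge> 6" and l6: "lam \<ge> 6"
    and vb: "\<forall>k v. v \<in> level Xs (Suc k) \<longrightarrow> e * mu k (par v) \<le> mu (Suc k) v \<and> mu (Suc k) v \<le> C * mu k (par v)"
    and C1: "C \<ge> 1" and e0: "e > 0" and e1: "e \<le> 1" and H1: "H \<ge> 1"
    and hb: "\<forall>k u v. u \<in> level Xs (Suc k) \<longrightarrow> v \<in> level Xs (Suc k) \<longrightarrow> hadj a lam Xs v u \<longrightarrow>
                mu (Suc k) v \<le> H * mu (Suc k) u"
    and nn: "\<forall>k. \<forall>v\<in>level Xs k. mu k v \<ge> 0"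
    and R0: "R > 0"
  shows "\<exists>C2\<ge>0. \<forall>n u v. u \<in> level Xs n \<longrightarrow> v \<in> level Xs n \<longrightarrow>
            dist (fst u) (fst v) < R * (1/a)^n \<longrightarrow> mu n v \<le> C2 * mu n u"
proof -
  have a0: "a > 0" using a6 by simp
  have t1: "1/a < 1" "1/a > 0" using a6 by auto
  obtain J where J: "(1/a)^J < 1/R" using real_arch_pow_inv[OF _ t1(1), of "1/R"] R0 by auto
  have JR: "R * (1/a)^J \<le> 1" using J R0 by (simp add: field_simps)
  have AB: "\<And>j m w. w \<in> level Xs (m + j) \<Longrightarrow> (par ^^ j) w \<in> level Xs m \<and>
     dist (fst w) (fst ((par ^^ j) w)) \<le> 6/5 * (1/a)^m \<and>
     mu (m + j) w \<le> C^j * mu m ((par ^^ j) w) \<and> e^j * mu m ((par ^^ j) w) \<le> mu (m + j) w"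
  proof -
    have "C \<ge> 0" "e \<ge> 0" using C1 e0 by auto
    from anc_bounds[OF fil a6 vb this] show "\<And>j m w. w \<in> level Xs (m + j) \<Longrightarrow> (par ^^ j) w \<in> level Xs m \<and>
     dist (fst w) (fst ((par ^^ j) w)) \<le> 6/5 * (1/a)^m \<and>
     mu (m + j) w \<le> C^j * mu m ((par ^^ j) w) \<and> e^j * mu m ((par ^^ j) w) \<le> mu (m + j) w" by blast
  qed
  define C2 where "C2 = C^J * H * (1/e)^J"
  have C2pos: "C2 \<ge> 0" unfolding C2_def using C1 H1 e0 by simp
  have main: "mu n v \<le> C2 * mu n u"
    if u: "u \<in> level Xs n" and v: "v \<in> level Xs n" and d: "dist (fst u) (fst v) < R * (1/a)^n" for n u v
  proof -
    have ex: "\<exists>m j. n = m + j \<and> j \<le> J \<and> mu m ((par ^^ j) v) \<le> H * mu m ((par ^^ j) u)"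
    proof (cases "J \<le> n")
      case False
      then have n0: "n = 0 + n" "n \<le> J" by auto
      have "(par ^^ n) u \<in> level Xs 0" "(par ^^ n) v \<in> level Xs 0" using AB[of u 0 n] AB[of v 0 n] u v by auto
      then have eq: "(par ^^ n) u = (par ^^ n) v" using level0[OF fil] by auto
      have "mu 0 ((par ^^ n) u) \<ge> 0" using nn \<open>(par ^^ n) u \<in> level Xs 0\<close> by blast
      then have "mu 0 ((par ^^ n) v) \<le> H * mu 0 ((par ^^ n) u)" using eq H1
        by (simp add: mult_le_cancel_right1)
      then show ?thesis using n0 by blast
    next
      case True
      then obtain m where m: "n = m + J" by (metis add.commute le_add_diff_inverse)
      define uj where "uj = (par ^^ J) u"
      define vj where "vj = (par ^^ J) v"
      have U: "uj \<in> level Xs m" "dist (fst u) (fst uj) \<le> 6/5 * (1/a)^m"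
        using AB[of u m J] u m unfolding uj_def by auto
      have V: "vj \<in> level Xs m" "dist (fst v) (fst vj) \<le> 6/5 * (1/a)^m"
        using AB[of v m J] v m unfolding vj_def by auto
      have dn: "R * (1/a)^n \<le> (1/a)^m"
      proof -
        have "R * (1/a)^n = (R * (1/a)^J) * (1/a)^m" using m by (simp add: power_add)
        also have "\<dots> \<le> 1 * (1/a)^m" by (rule mult_right_mono[OF JR]) (use t1 in simp)
        finally show ?thesis by simp
      qed
      have "dist (fst vj) (fst uj) \<le> dist (fst vj) (fst v) + dist (fst v) (fst uj)" by (rule dist_triangle)
      also have "\<dots> \<le> dist (fst vj) (fst v) + (dist (fst v) (fst u) + dist (fst u) (fst uj))"
        using dist_triangle by auto
      finally have "dist (fst vj) (fst uj) < 6/5 * (1/a)^m + (R * (1/a)^n + 6/5 * (1/a)^m)"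
        using U V d by (simp add: dist_commute)
      also have "\<dots> \<le> lam * (1/a)^m"
      proof -
        have "6 * (1/a)^m \<le> lam * (1/a)^m" by (rule mult_right_mono) (use l6 t1 in auto)
        moreover have "(1/a)^m \<ge> 0" using t1 by simp
        ultimately show ?thesis using dn by linarith
      qed
      finally have dd: "dist (fst vj) (fst uj) < lam * a powr (- real m)" using powr_to_pow[OF a0] by simp
      have "mu m vj \<le> H * mu m uj"
      proof (cases "uj = vj")
        case True
        have "mu m uj \<ge> 0" using nn U(1) by blast
        then show ?thesis using True H1 by (simp add: mult_le_cancel_right1)
      next
        case False
        show ?thesis
        proof (cases m)
          case 0
          then show ?thesis using U(1) V(1) False level0[OF fil] by auto
        next
          case (Suc k)
          have "hadj a lam Xs vj uj"
            unfolding hadj_def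
          proof (intro conjI)
            show "vj \<in> vertices Xs" "uj \<in> vertices Xs" using level_vertices[OF U(1)] level_vertices[OF V(1)] by auto
            show "snd vj = snd uj" using U V by (simp add: level_mem)
            show "vj \<noteq> uj" using False by auto
            have "fst uj \<in> ball (fst vj) (lam * a powr (- real (snd vj)))"
              using dd V(1) by (simp add: level_mem)
            moreover have "fst uj \<in> ball (fst uj) (lam * a powr (- real (snd uj)))"
              using l6 a0 by simp
            ultimately show "ball (fst vj) (lam * a powr (- real (snd vj))) \<inter> ball (fst uj) (lam * a powr (- real (snd uj))) \<noteq> {}"
              by blast
          qed
          then show ?thesis using hb U(1) V(1) Suc by blast
        qed
      qed
      then show ?thesis using m uj_def vj_def by blast
    qed
    then obtain m j where mj: "n = m + j" "j \<le> J" "mu m ((par ^^ j) v) \<le> H * mu m ((par ^^ j) u)" by blast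
    have Au: "e^j * mu m ((par ^^ j) u) \<le> mu n u" "(par ^^ j) u \<in> level Xs m" using AB[of u m j] u mj(1) by auto
    have Av: "mu n v \<le> C^j * mu m ((par ^^ j) v)" using AB[of v m j] v mj(1) by auto
    have ej: "e^j > 0" using e0 by simp
    have muu: "mu n u \<ge> 0" "mu m ((par ^^ j) u) \<ge> 0" using nn u Au(2) by auto
    have uj_le: "mu m ((par ^^ j) u) \<le> (1/e)^j * mu n u"
      using Au(1) ej by (simp add: field_simps power_one_over)
    have Cj: "C^j \<le> C^J" using power_increasing[OF mj(2) C1] .
    have ie: "1 \<le> 1/e" using e0 e1 by simp
    have ejJ: "(1/e)^j \<le> (1/e)^J" by (rule power_increasing[OF mj(2) ie])
    have "mu n v \<le> C^j * (H * mu m ((par ^^ j) u))"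
    proof -
      have "C^j \<ge> 0" using C1 by simp
      then have "C^j * mu m ((par ^^ j) v) \<le> C^j * (H * mu m ((par ^^ j) u))"
        using mj(3) by (rule mult_left_mono[rotated])
      then show ?thesis using Av by linarith
    qed
    also have "\<dots> \<le> C^j * (H * ((1/e)^j * mu n u))"
      using uj_le C1 H1 by (intro mult_left_mono) auto
    also have "\<dots> \<le> C^J * (H * ((1/e)^J * mu n u))"
    proof (rule mult_mono[OF Cj])
      show "H * ((1/e)^j * mu n u) \<le> H * ((1/e)^J * mu n u)"
        using ejJ muu H1 by (intro mult_left_mono mult_right_mono) auto
    qed (use H1 muu C1 e0 in auto)
    also have "\<dots> = C2 * mu n u" unfolding C2_def by simp
    finally show ?thesis .
  qed
  show ?thesis using C2pos main by blast
qed

lemma doubling_iter: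
  assumes "doubling_metric_space TYPE('a::metric_space)"
  shows "\<exists>N::nat. \<forall>m (x::'a) r. r > 0 \<longrightarrow>
     (\<exists>F. finite F \<and> card F \<le> N^m \<and> ball x r \<subseteq> (\<Union>y\<in>F. ball y (r / 2^m)))"
proof -
  obtain N :: nat where N: "\<forall>(x::'a) r. r > 0 \<longrightarrow>
        (\<exists>F. finite F \<and> card F \<le> N \<and> ball x r \<subseteq> (\<Union>y\<in>F. ball y (r/2)))"
    using assms unfolding doubling_metric_space_def by blast
  have "\<forall>(x::'a) r. r > 0 \<longrightarrow> (\<exists>F. finite F \<and> card F \<le> N^m \<and> ball x r \<subseteq> (\<Union>y\<in>F. ball y (r / 2^m)))" for m
  proof (induction m)
    case 0
    show ?case
    proof (intro allI impI)
      fix x :: 'a and r :: real assume "r > 0"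
      show "\<exists>F. finite F \<and> card F \<le> N^0 \<and> ball x r \<subseteq> (\<Union>y\<in>F. ball y (r / 2^0))"
        by (rule exI[of _ "{x}"]) simp
    qed
  next
    case (Suc m)
    show ?case
    proof (intro allI impI)
      fix x :: 'a and r :: real assume r: "r > 0"
      obtain F where F: "finite F" "card F \<le> N^m" "ball x r \<subseteq> (\<Union>y\<in>F. ball y (r / 2^m))"
        using Suc.IH[rule_format, of r x, OF r] by (elim exE conjE) (rule that)
      have rm: "r / 2^m > 0" using r by simp
      have "\<forall>y::'a. \<exists>G. finite G \<and> card G \<le> N \<and> ball y (r/2^m) \<subseteq> (\<Union>z\<in>G. ball z (r/2^m/2))"
      proof
        fix y :: 'a
        have h: "\<forall>r'::real. r' > 0 \<longrightarrow> (\<exists>F. finite F \<and> card F \<le> N \<and> ball y r' \<subseteq> (\<Union>y\<in>F. ball y (r'/2)))"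
          using N by blast
        show "\<exists>G. finite G \<and> card G \<le> N \<and> ball y (r/2^m) \<subseteq> (\<Union>z\<in>G. ball z (r/2^m/2))"
          by (rule h[rule_format, OF rm])
      qed
      from choice[OF this] obtain G :: "'a \<Rightarrow> 'a set" where G0: "\<forall>y. finite (G y) \<and> card (G y) \<le> N \<and> ball y (r/2^m) \<subseteq> (\<Union>z\<in>G y. ball z (r/2^m/2))"
        by (elim exE) (rule that)
      then have G: "\<And>y. finite (G y) \<and> card (G y) \<le> N \<and> ball y (r/2^m) \<subseteq> (\<Union>z\<in>G y. ball z (r/2^m/2))"
        by blast
      define F' where "F' = (\<Union>y\<in>F. G y)"
      have fin: "finite F'" unfolding F'_def using F(1) G by auto
      have "card F' \<le> (\<Sum>y\<in>F. card (G y))" unfolding F'_def by (rule card_UN_le[OF F(1)])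
      also have "\<dots> \<le> card F * N" using sum_bounded_above[of F "\<lambda>y. card (G y)" N] G by auto
      also have "\<dots> \<le> N^m * N" using F(2) by simp
      finally have c: "card F' \<le> N^Suc m" by (simp add: mult.commute)
      have "ball x r \<subseteq> (\<Union>y\<in>F'. ball y (r / 2^Suc m))"
      proof
        fix z assume "z \<in> ball x r"
        then obtain y where y: "y \<in> F" "z \<in> ball y (r/2^m)" using F(3) by blast
        then obtain w where w: "w \<in> G y" "z \<in> ball w (r/2^m/2)" using G by blast
        have e: "r/2^m/2 = r / 2^Suc m" by simp
        have "w \<in> F'" unfolding F'_def using y(1) w(1) by blast
        then show "z \<in> (\<Union>y\<in>F'. ball y (r / 2^Suc m))" using w(2) unfolding e by blast
      qed
      then show "\<exists>F. finite F \<and> card F \<le> N^Suc m \<and> ball x r \<subseteq> (\<Union>y\<in>F. ball y (r / 2^Suc m))"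
        using fin c by blast
    qed
  qed
  then show ?thesis by blast
qed

lemma count_bound:
  fixes a R :: real
  assumes dbl: "doubling_metric_space TYPE('a::metric_space)"
    and fil: "hyperbolic_filling a (x0::'a) Xs par" and a0: "a > 0" and R0: "R > 0"
    and fin: "\<forall>n. finite (level Xs n)"
  shows "\<exists>N1::nat. \<forall>n (x::'a). card {v\<in>level Xs n. dist x (fst v) < R * (1/a)^n} \<le> N1"
proof -
  obtain N :: nat where N: "\<forall>m (x::'a) r. r > 0 \<longrightarrow>
     (\<exists>F. finite F \<and> card F \<le> N^m \<and> ball x r \<subseteq> (\<Union>y\<in>F. ball y (r / 2^m)))"
    using doubling_iter[OF dbl] by blast
  obtain m where m: "2 * R < 2^m" using real_arch_pow[of 2 "2*R"] by auto
  have "card {v\<in>level Xs n. dist x (fst v) < R * (1/a)^n} \<le> N^m" for n x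
  proof -
    define r where "r = R * (1/a)^n"
    have r0: "r > 0" unfolding r_def using R0 a0 by simp
    have tn: "(1/a)^n > 0" using a0 by simp
    have rm: "r / 2^m < (1/a)^n / 2"
    proof -
      have "r / 2^m * 2^m = r" by simp
      have "(1/a)^n * (2 * R) < (1/a)^n * 2^m" by (rule mult_strict_left_mono[OF m tn])
      then have "r * 2 < (1/a)^n * 2^m" unfolding r_def by (simp add: algebra_simps)
      then show ?thesis by (simp add: field_simps)
    qed
    obtain F where F: "finite F" "card F \<le> N^m" "ball x r \<subseteq> (\<Union>y\<in>F. ball y (r / 2^m))"
      using N r0 by blast
    define S where "S = {v\<in>level Xs n. dist x (fst v) < r}"
    define g where "g v = (SOME y. y \<in> F \<and> fst v \<in> ball y (r/2^m))" for v :: "'a \<times> nat"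
    have gS: "g v \<in> F \<and> fst v \<in> ball (g v) (r/2^m)" if "v \<in> S" for v
    proof -
      have "fst v \<in> ball x r" using that unfolding S_def by (simp add: dist_commute)
      then have "\<exists>y. y \<in> F \<and> fst v \<in> ball y (r/2^m)" using F(3) by blast
      then show ?thesis unfolding g_def by (rule someI_ex)
    qed
    have sep: "separated (a powr (- real n)) (Xs n)" using fil unfolding hyperbolic_filling_def maximal_separated_def by blast
    have inj: "inj_on g S"
    proof (rule inj_onI)
      fix v w assume v: "v \<in> S" and w: "w \<in> S" and eq: "g v = g w"
      have "dist (fst v) (fst w) \<le> dist (fst v) (g v) + dist (g w) (fst w)"
        using dist_triangle[of "fst v" "fst w" "g v"] eq by (simp add: dist_commute)
      also have "\<dots> < (1/a)^n"
      proof -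
        have "dist (fst v) (g v) < r/2^m" "dist (g w) (fst w) < r/2^m" using gS[OF v] gS[OF w] by (auto simp: dist_commute)
        then show ?thesis using rm by linarith
      qed
      finally have d: "dist (fst v) (fst w) < a powr (- real n)" using powr_to_pow[OF a0] by simp
      have lv: "snd v = n" "fst v \<in> Xs n" "snd w = n" "fst w \<in> Xs n" using v w unfolding S_def by (auto simp: level_mem)
      have "fst v = fst w"
      proof (rule ccontr)
        assume "fst v \<noteq> fst w"
        then have "dist (fst v) (fst w) \<ge> a powr (- real n)" using sep lv unfolding separated_def by blast
        then show False using d by linarith
      qed
      then show "v = w" using lv by (simp add: prod_eq_iff)
    qed
    have "card S \<le> card F" by (rule card_inj_on_le[OF inj _ F(1)]) (use gS in blast)
    then show ?thesis using F(2) unfolding S_def r_def by simp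
  qed
  then show ?thesis by blast
qed

lemma fst_meas_density: "fst \<in> measurable (density (count_space L) g) (borel :: 'a::topological_space measure)"
  by (simp add: measurable_cong_sets[OF sets_density refl] measurable_count_space_eq1)

lemma push_integral:
  fixes f :: "'a::topological_space \<times> nat \<Rightarrow> real"
  assumes fin: "finite (level Xs k)" and nn: "\<forall>v\<in>level Xs k. f v \<ge> 0"
    and g: "g \<in> borel_measurable borel"
  shows "integral\<^sup>L (push_measure Xs k f) g = (\<Sum>v\<in>level Xs k. f v * g (fst v))"
proof -
  have "integral\<^sup>L (push_measure Xs k f) g =
      integral\<^sup>L (density (count_space (level Xs k)) (\<lambda>v. ennreal (f v))) (\<lambda>v. g (fst v))"
    unfolding push_measure_def by (rule integral_distr[OF fst_meas_density g])
  also have "\<dots> = integral\<^sup>L (count_space (level Xs k)) (\<lambda>v. f v *\<^sub>R g (fst v))"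
    by (rule integral_density) (auto simp: AE_count_space nn)
  also have "\<dots> = (\<Sum>v\<in>level Xs k. f v * g (fst v))"
    by (simp add: lebesgue_integral_count_space_finite[OF fin])
  finally show ?thesis .
qed

lemma space_push: "space (push_measure Xs k f) = UNIV"
  unfolding push_measure_def by simp

lemma sets_push: "sets (push_measure Xs k f) = sets borel"
  unfolding push_measure_def by simp

lemma push_measure_set:
  fixes f :: "'a::topological_space \<times> nat \<Rightarrow> real"
  assumes fin: "finite (level Xs k)" and nn: "\<forall>v\<in>level Xs k. f v \<ge> 0"
    and B: "B \<in> sets borel"
  shows "measure (push_measure Xs k f) B = nuL (level Xs k) f B"
proof -
  have "measure (push_measure Xs k f) B = integral\<^sup>L (push_measure Xs k f) (indicator B)"
    by (simp add: integral_indicator space_push)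
  also have "\<dots> = (\<Sum>v\<in>level Xs k. f v * indicator B (fst v))"
    by (rule push_integral[OF fin nn]) (use B in simp)
  also have "\<dots> = (\<Sum>v\<in>level Xs k. if fst v \<in> B then f v else 0)"
    by (rule sum.cong) (auto simp: indicator_def)
  also have "\<dots> = nuL (level Xs k) f B"
    unfolding nuL_def by (simp add: sum.inter_filter[OF fin])
  finally show ?thesis .
qed

lemma nuL_mono:
  assumes fin: "finite L" and nn: "\<forall>v\<in>L. f v \<ge> 0" and AB: "A \<subseteq> B"
  shows "nuL L f A \<le> nuL L f B"
  unfolding nuL_def by (rule sum_mono2) (use fin nn AB in auto)

lemma coupling_step:
  fixes P :: "('a::metric_space \<times> 'a) measure" and f g :: "'a \<times> nat \<Rightarrow> real"
  assumes ps: "prob_space P" and sP: "sets P = sets borel"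
    and d1: "distr P borel fst = push_measure Xs k f"
    and d2: "distr P borel snd = push_measure Xs k' g"
    and bad: "emeasure P {(x1, x2). dist x1 x2 \<ge> c} = 0"
    and fin: "finite (level Xs k)" "finite (level Xs k')"
    and nnf: "\<forall>v\<in>level Xs k. f v \<ge> 0" and nng: "\<forall>v\<in>level Xs k'. g v \<ge> 0"
  shows "nuL (level Xs k) f (ball x s) \<le> nuL (level Xs k') g (ball x (s + c))"
    and "nuL (level Xs k') g (ball x s) \<le> nuL (level Xs k) f (ball x (s + c))"
proof -
  have fm: "finite_measure P" using prob_space.finite_measure[OF ps] .
  have spP: "space P = UNIV" using sets_eq_imp_space_eq[OF sP] by simp
  have mfst: "fst \<in> measurable P borel"
    unfolding measurable_cong_sets[OF sP refl]
    by (intro borel_measurable_continuous_onI continuous_intros)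
  have msnd: "snd \<in> measurable P borel"
    unfolding measurable_cong_sets[OF sP refl]
    by (intro borel_measurable_continuous_onI continuous_intros)
  define Bd where "Bd = {(x1::'a, x2::'a). dist x1 x2 \<ge> c}"
  have Bd_eq: "Bd = {p. c \<le> dist (fst p) (snd p)}" unfolding Bd_def by auto
  have Bd_closed: "closed Bd" unfolding Bd_eq
    by (intro closed_Collect_le continuous_intros)
  have Bd_sets: "Bd \<in> sets P" unfolding sP using Bd_closed by (rule borel_closed)
  have Bd0: "measure P Bd = 0" using bad unfolding Bd_def measure_def by simp
  have ball_sets: "ball y t \<in> sets borel" for y :: 'a and t by simp
  have m1: "measure (push_measure Xs k f) (ball y t) = measure P (fst -` ball y t)" for y t
    using measure_distr[OF mfst ball_sets[of y t]] d1 spP by simp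
  have m2: "measure (push_measure Xs k' g) (ball y t) = measure P (snd -` ball y t)" for y t
    using measure_distr[OF msnd ball_sets[of y t]] d2 spP by simp
  have pre1: "fst -` ball y t \<in> sets P" and pre2: "snd -` ball y t \<in> sets P" for y t
    using measurable_sets[OF mfst ball_sets[of y t]] measurable_sets[OF msnd ball_sets[of y t]] spP by auto
  have incl1: "fst -` ball x s \<subseteq> snd -` ball x (s + c) \<union> Bd"
  proof
    fix p :: "'a \<times> 'a" assume p: "p \<in> fst -` ball x s"
    show "p \<in> snd -` ball x (s + c) \<union> Bd"
    proof (cases "p \<in> Bd")
      case False
      then have "dist (fst p) (snd p) < c" unfolding Bd_eq by auto
      moreover have "dist x (fst p) < s" using p by auto
      ultimately have "dist x (snd p) < s + c" using dist_triangle[of x "snd p" "fst p"] by linarith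
      then show ?thesis by auto
    qed auto
  qed
  have incl2: "snd -` ball x s \<subseteq> fst -` ball x (s + c) \<union> Bd"
  proof
    fix p :: "'a \<times> 'a" assume p: "p \<in> snd -` ball x s"
    show "p \<in> fst -` ball x (s + c) \<union> Bd"
    proof (cases "p \<in> Bd")
      case False
      then have "dist (fst p) (snd p) < c" unfolding Bd_eq by auto
      moreover have "dist x (snd p) < s" using p by auto
      ultimately have "dist x (fst p) < s + c" using dist_triangle[of x "fst p" "snd p"] by (simp add: dist_commute)
      then show ?thesis by auto
    qed auto
  qed
  have "measure P (fst -` ball x s) \<le> measure P (snd -` ball x (s + c) \<union> Bd)"
    by (rule finite_measure.finite_measure_mono[OF fm incl1]) (use pre2 Bd_sets in auto)
  also have "\<dots> \<le> measure P (snd -` ball x (s + c)) + measure P Bd"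
    by (rule measure_Un_le[OF pre2 Bd_sets])
  finally have i1: "measure P (fst -` ball x s) \<le> measure P (snd -` ball x (s + c))" using Bd0 by simp
  have "measure P (snd -` ball x s) \<le> measure P (fst -` ball x (s + c) \<union> Bd)"
    by (rule finite_measure.finite_measure_mono[OF fm incl2]) (use pre1 Bd_sets in auto)
  also have "\<dots> \<le> measure P (fst -` ball x (s + c)) + measure P Bd"
    by (rule measure_Un_le[OF pre1 Bd_sets])
  finally have i2: "measure P (snd -` ball x s) \<le> measure P (fst -` ball x (s + c))" using Bd0 by simp
  show "nuL (level Xs k) f (ball x s) \<le> nuL (level Xs k') g (ball x (s + c))"
    using i1 m1 m2 push_measure_set[OF fin(1) nnf ball_sets] push_measure_set[OF fin(2) nng ball_sets] by simp
  show "nuL (level Xs k') g (ball x s) \<le> nuL (level Xs k) f (ball x (s + c))"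
    using i2 m1 m2 push_measure_set[OF fin(1) nnf ball_sets] push_measure_set[OF fin(2) nng ball_sets] by simp
qed

lemma iterate_coupling:
  fixes mu :: "nat \<Rightarrow> 'a::metric_space \<times> nat \<Rightarrow> real" and a :: real
  assumes a6: "a \<ge> 6"
    and step: "\<forall>k (x::'a) s. nuL (level Xs k) (mu k) (ball x s) \<le> nuL (level Xs (Suc k)) (mu (Suc k)) (ball x (s + 3 * (1/a)^k)) \<and>
        nuL (level Xs (Suc k)) (mu (Suc k)) (ball x s) \<le> nuL (level Xs k) (mu k) (ball x (s + 3 * (1/a)^k))"
    and fin: "\<forall>k. finite (level Xs k)" and nn: "\<forall>k. \<forall>v\<in>level Xs k. mu k v \<ge> 0"
  shows "\<forall>s. nuL (level Xs n) (mu n) (ball x s) \<le> nuL (level Xs (n + j)) (mu (n + j)) (ball x (s + 4 * ((1/a)^n - (1/a)^(n+j)))) \<and>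
     nuL (level Xs (n + j)) (mu (n + j)) (ball x s) \<le> nuL (level Xs n) (mu n) (ball x (s + 4 * ((1/a)^n - (1/a)^(n+j))))"
proof (induction j)
  case 0
  then show ?case by simp
next
  case (Suc j)
  have mono: "nuL (level Xs k) (mu k) (ball x r1) \<le> nuL (level Xs k) (mu k) (ball x r2)" if "r1 \<le> r2" for k r1 r2
    by (rule nuL_mono) (use fin nn that in auto)
  define t where "t = (1/a)^(n+j)"
  have t0: "t \<ge> 0" unfolding t_def using a6 by simp
  have tS: "(1/a)^(n + Suc j) = t / a" unfolding t_def by simp
  have key: "3 * t \<le> 4 * t - 4 * (t / a)"
  proof -
    have "t / a \<le> t / 6" by (rule divide_left_mono) (use a6 t0 in auto)
    then show ?thesis using t0 by linarith
  qed
  have key': "3 * t \<le> 4 * t - 4 * (1/a)^(n + Suc j)" by (subst tS) (rule key)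
  show ?case
  proof (intro allI conjI)
    fix s
    let ?s' = "s + 4 * ((1/a)^n - t)"
    have "nuL (level Xs n) (mu n) (ball x s) \<le> nuL (level Xs (n + j)) (mu (n + j)) (ball x ?s')"
      using Suc.IH unfolding t_def by blast
    also have "\<dots> \<le> nuL (level Xs (Suc (n + j))) (mu (Suc (n + j))) (ball x (?s' + 3 * t))"
      using step unfolding t_def by blast
    also have "\<dots> \<le> nuL (level Xs (Suc (n + j))) (mu (Suc (n + j))) (ball x (s + 4 * ((1/a)^n - (1/a)^(n + Suc j))))"
      using key' by (intro mono) (simp add: algebra_simps)
    finally show "nuL (level Xs n) (mu n) (ball x s) \<le> nuL (level Xs (n + Suc j)) (mu (n + Suc j)) (ball x (s + 4 * ((1/a)^n - (1/a)^(n + Suc j))))"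
      by simp
  next
    fix s
    have "nuL (level Xs (Suc (n + j))) (mu (Suc (n + j))) (ball x s) \<le> nuL (level Xs (n + j)) (mu (n + j)) (ball x (s + 3 * t))"
      using step unfolding t_def by blast
    also have "\<dots> \<le> nuL (level Xs n) (mu n) (ball x (s + 3 * t + 4 * ((1/a)^n - t)))"
      using Suc.IH unfolding t_def by blast
    also have "\<dots> \<le> nuL (level Xs n) (mu n) (ball x (s + 4 * ((1/a)^n - (1/a)^(n + Suc j))))"
      using key' by (intro mono) (simp add: algebra_simps)
    finally show "nuL (level Xs (n + Suc j)) (mu (n + Suc j)) (ball x s) \<le> nuL (level Xs n) (mu n) (ball x (s + 4 * ((1/a)^n - (1/a)^(n + Suc j))))"
      by simp
  qed
qed

lemma iterate_coupling':
  fixes mu :: "nat \<Rightarrow> 'a::metric_space \<times> nat \<Rightarrow> real" and a :: real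
  assumes a6: "a \<ge> 6"
    and step: "\<forall>k (x::'a) s. nuL (level Xs k) (mu k) (ball x s) \<le> nuL (level Xs (Suc k)) (mu (Suc k)) (ball x (s + 3 * (1/a)^k)) \<and>
        nuL (level Xs (Suc k)) (mu (Suc k)) (ball x s) \<le> nuL (level Xs k) (mu k) (ball x (s + 3 * (1/a)^k))"
    and fin: "\<forall>k. finite (level Xs k)" and nn: "\<forall>k. \<forall>v\<in>level Xs k. mu k v \<ge> 0"
    and nk: "n \<le> k"
  shows "nuL (level Xs n) (mu n) (ball x s) \<le> nuL (level Xs k) (mu k) (ball x (s + 4 * (1/a)^n))"
    and "nuL (level Xs k) (mu k) (ball x s) \<le> nuL (level Xs n) (mu n) (ball x (s + 4 * (1/a)^n))"
proof -
  obtain j where k: "k = n + j" using nk le_Suc_ex by blast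
  have mono: "nuL (level Xs k) (mu k) (ball x r1) \<le> nuL (level Xs k) (mu k) (ball x r2)" if "r1 \<le> r2" for k r1 r2
    by (rule nuL_mono) (use fin nn that in auto)
  have I: "nuL (level Xs n) (mu n) (ball x s) \<le> nuL (level Xs k) (mu k) (ball x (s + 4 * ((1/a)^n - (1/a)^k)))"
     "nuL (level Xs k) (mu k) (ball x s) \<le> nuL (level Xs n) (mu n) (ball x (s + 4 * ((1/a)^n - (1/a)^k)))"
    using iterate_coupling[OF a6 step fin nn, of n x j] k by auto
  have le: "s + 4 * ((1/a)^n - (1/a)^k) \<le> s + 4 * (1/a)^n" using a6 by simp
  show "nuL (level Xs n) (mu n) (ball x s) \<le> nuL (level Xs k) (mu k) (ball x (s + 4 * (1/a)^n))"
    using I(1) mono[OF le, of k] by linarith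
  show "nuL (level Xs k) (mu k) (ball x s) \<le> nuL (level Xs n) (mu n) (ball x (s + 4 * (1/a)^n))"
    using I(2) mono[OF le, of n] by linarith
qed

lemma key_level:
  fixes mu :: "nat \<Rightarrow> 'a::metric_space \<times> nat \<Rightarrow> real" and a R C2 :: real
  assumes dbl: "doubling_metric_space TYPE('a)"
    and fil: "hyperbolic_filling a (x0::'a) Xs par" and a6: "a \<ge> 6" and R0: "R > 0"
    and fin: "\<forall>k. finite (level Xs k)" and nn: "\<forall>k. \<forall>v\<in>level Xs k. mu k v \<ge> 0"
    and C20: "C2 \<ge> 0"
    and cmp: "\<forall>n u v. u \<in> level Xs n \<longrightarrow> v \<in> level Xs n \<longrightarrow>
            dist (fst u) (fst v) < (R + 1) * (1/a)^n \<longrightarrow> mu n v \<le> C2 * mu n u"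
  shows "\<exists>C1\<ge>0. \<forall>n (x::'a). nuL (level Xs n) (mu n) (ball x (R * (1/a)^n)) \<le> C1 * nuL (level Xs n) (mu n) (ball x ((1/a)^n))"
proof -
  have a0: "a > 0" using a6 by simp
  obtain N1 :: nat where N1: "\<forall>n (x::'a). card {v\<in>level Xs n. dist x (fst v) < R * (1/a)^n} \<le> N1"
    using count_bound[OF dbl fil a0 R0 fin] by blast
  have "nuL (level Xs n) (mu n) (ball x (R * (1/a)^n)) \<le> (real N1 * C2) * nuL (level Xs n) (mu n) (ball x ((1/a)^n))"
    for n and x :: 'a
  proof -
    have ms: "maximal_separated (a powr (- real n)) (Xs n)" using fil unfolding hyperbolic_filling_def by blast
    obtain y where y: "y \<in> Xs n" "dist x y < (1/a)^n"
      using max_sep_dense[OF ms, of x] a0 powr_to_pow[OF a0, of n] by auto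
    define u where "u = (y, n)"
    have u: "u \<in> level Xs n" unfolding u_def level_def using y by auto
    define S where "S = {v\<in>level Xs n. fst v \<in> ball x (R * (1/a)^n)}"
    define T where "T = {v\<in>level Xs n. fst v \<in> ball x ((1/a)^n)}"
    have finS: "finite S" "finite T" unfolding S_def T_def using fin by auto
    have uT: "u \<in> T" unfolding T_def u_def using u y by (auto simp: u_def)
    have mu_u: "mu n u \<le> nuL (level Xs n) (mu n) (ball x ((1/a)^n))"
      unfolding nuL_def T_def[symmetric]
      by (rule member_le_sum[OF uT _ finS(2)]) (use nn in \<open>auto simp: T_def\<close>)
    have bnd: "mu n v \<le> C2 * mu n u" if v: "v \<in> S" for v
    proof -
      have vl: "v \<in> level Xs n" and dv: "dist x (fst v) < R * (1/a)^n" using v unfolding S_def by auto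
      have "dist (fst u) (fst v) \<le> dist y x + dist x (fst v)" unfolding u_def using dist_triangle[of y "fst v" x] by simp
      also have "\<dots> < (1/a)^n + R * (1/a)^n" using y(2) dv by (simp add: dist_commute)
      also have "\<dots> = (R + 1) * (1/a)^n" by (simp add: algebra_simps)
      finally show ?thesis using cmp u vl by blast
    qed
    have cS: "card S \<le> N1"
    proof -
      have "S = {v\<in>level Xs n. dist x (fst v) < R * (1/a)^n}" unfolding S_def by auto
      then show ?thesis using N1 by simp
    qed
    have "nuL (level Xs n) (mu n) (ball x (R * (1/a)^n)) = sum (mu n) S" unfolding nuL_def S_def by simp
    also have "\<dots> \<le> real (card S) * (C2 * mu n u)" using sum_bounded_above[of S "mu n" "C2 * mu n u"] bnd by auto
    also have "\<dots> \<le> real N1 * (C2 * mu n u)"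
      by (rule mult_right_mono) (use cS C20 nn u in auto)
    also have "\<dots> \<le> real N1 * (C2 * nuL (level Xs n) (mu n) (ball x ((1/a)^n)))"
      using mu_u C20 by (intro mult_left_mono) auto
    finally show ?thesis by (simp add: mult.assoc)
  qed
  moreover have "real N1 * C2 \<ge> 0" using C20 by simp
  ultimately show ?thesis by blast
qed

lemma nuL_filter: "finite L \<Longrightarrow> nuL L f A = (\<Sum>v\<in>L. if fst v \<in> A then f v else 0)"
  unfolding nuL_def by (simp add: sum.inter_filter)

lemma level_doubling:
  fixes mu :: "nat \<Rightarrow> 'a::metric_space \<times> nat \<Rightarrow> real" and a C1 :: real
  assumes a6: "a \<ge> 6"
    and step: "\<forall>k (x::'a) s. nuL (level Xs k) (mu k) (ball x s) \<le> nuL (level Xs (Suc k)) (mu (Suc k)) (ball x (s + 3 * (1/a)^k)) \<and>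
        nuL (level Xs (Suc k)) (mu (Suc k)) (ball x s) \<le> nuL (level Xs k) (mu k) (ball x (s + 3 * (1/a)^k))"
    and fin: "\<forall>k. finite (level Xs k)" and nn: "\<forall>k. \<forall>v\<in>level Xs k. mu k v \<ge> 0"
    and s1: "\<forall>k. (\<Sum>v\<in>level Xs k. mu k v) = 1"
    and diam: "\<forall>x y::'a. dist x y \<le> 1/2"
    and C10: "C1 \<ge> 0"
    and key: "\<forall>n (x::'a). nuL (level Xs n) (mu n) (ball x ((30 * a + 4) * (1/a)^n)) \<le> C1 * nuL (level Xs n) (mu n) (ball x ((1/a)^n))"
    and r0: "r > 0"
  shows "\<exists>K. \<forall>k\<ge>K. nuL (level Xs k) (mu k) (ball x (3 * r)) \<le> max 1 C1 * nuL (level Xs k) (mu k) (ball x (r / 2))"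
proof -
  have a0: "a > 0" using a6 by simp
  have mono: "nuL (level Xs k) (mu k) A \<le> nuL (level Xs k) (mu k) B" if "A \<subseteq> B" for k A B
    by (rule nuL_mono) (use fin nn that in auto)
  have monob: "nuL (level Xs k) (mu k) (ball x r1) \<le> nuL (level Xs k) (mu k) (ball x r2)" if "r1 \<le> r2" for k r1 r2
    by (rule mono) (use that in auto)
  have nu_nn: "nuL (level Xs k) (mu k) A \<ge> 0" for k A
    unfolding nuL_def by (rule sum_nonneg) (use nn in auto)
  have nu_univ: "nuL (level Xs k) (mu k) UNIV = 1" for k using s1 unfolding nuL_def by simp
  show ?thesis
  proof (cases "r \<ge> 10")
    case True
    have "ball x (r/2) = UNIV"
    proof (intro set_eqI iffI)
      fix y :: 'a
      have "dist x y \<le> 1/2" using diam by blast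
      then show "y \<in> ball x (r/2)" using True by simp
    qed auto
    then have eq1: "nuL (level Xs k) (mu k) (ball x (r/2)) = 1" for k using nu_univ by simp
    have "nuL (level Xs k) (mu k) (ball x (3 * r)) \<le> max 1 C1 * nuL (level Xs k) (mu k) (ball x (r / 2))" for k
      using mono[of "ball x (3*r)" UNIV k] nu_univ eq1 by simp
    then show ?thesis by blast
  next
    case False
    have t1: "1/a < 1" "1/a > 0" using a6 by auto
    have ex: "\<exists>n. (1/a)^n \<le> r/10"
    proof -
      obtain n where "(1/a)^n < r/10" using real_arch_pow_inv[OF _ t1(1), of "r/10"] r0 by auto
      then show ?thesis by (intro exI[of _ n]) simp
    qed
    define n where "n = (LEAST n. (1/a)^n \<le> r/10)"
    have tn: "(1/a)^n \<le> r/10" unfolding n_def by (rule LeastI_ex[OF ex])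
    have n0: "n \<noteq> 0" using tn False by (cases n) auto
    then obtain m where nm: "n = Suc m" by (cases n) auto
    have tm: "\<not> (1/a)^m \<le> r/10" using not_less_Least[of m "\<lambda>n. (1/a)^n \<le> r/10"] nm unfolding n_def by simp
    have tm': "(1/a)^m = a * (1/a)^n" using nm a0 by simp
    define t where "t = (1/a)^n"
    have t0: "t > 0" unfolding t_def using a0 by simp
    have r_up: "3 * r + 4 * t \<le> (30 * a + 4) * t"
    proof -
      have "r < 10 * (a * t)" using tm tm' unfolding t_def by simp
      then show ?thesis by (simp add: algebra_simps)
    qed
    have r_low: "t \<le> r / 2 - 4 * t" using tn unfolding t_def by simp
    have "nuL (level Xs k) (mu k) (ball x (3 * r)) \<le> max 1 C1 * nuL (level Xs k) (mu k) (ball x (r / 2))"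
      if k: "k \<ge> n" for k
    proof -
      have "nuL (level Xs k) (mu k) (ball x (3 * r)) \<le> nuL (level Xs n) (mu n) (ball x (3 * r + 4 * t))"
        using iterate_coupling'(2)[OF a6 step fin nn k] unfolding t_def by blast
      also have "\<dots> \<le> nuL (level Xs n) (mu n) (ball x ((30 * a + 4) * t))" by (rule monob[OF r_up])
      also have "\<dots> \<le> C1 * nuL (level Xs n) (mu n) (ball x t)" using key unfolding t_def by blast
      also have "\<dots> \<le> C1 * nuL (level Xs n) (mu n) (ball x (r / 2 - 4 * t))"
        by (rule mult_left_mono[OF monob[OF r_low] C10])
      also have "\<dots> \<le> C1 * nuL (level Xs k) (mu k) (ball x (r / 2 - 4 * t + 4 * t))"
        using iterate_coupling'(1)[OF a6 step fin nn k, of x "r/2 - 4 * t"] C10 unfolding t_def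
        by (intro mult_left_mono) auto
      also have "\<dots> \<le> max 1 C1 * nuL (level Xs k) (mu k) (ball x (r / 2))"
        using nu_nn by (simp add: mult_right_mono)
      finally show ?thesis .
    qed
    then show ?thesis by blast
  qed
qed

theorem lemma3p15:
  fixes a lam p C eta_m eta_p K0 :: real
    and x0 :: "'a::metric_space"
    and Xs :: "nat \<Rightarrow> 'a set"
    and par :: "'a \<times> nat \<Rightarrow> 'a \<times> nat"
    and rho :: "'a \<times> nat \<Rightarrow> real"
    and mu :: "nat \<Rightarrow> 'a \<times> nat \<Rightarrow> real"
    and r :: "nat \<Rightarrow> nat"
    and M :: "'a measure"
  assumes compact_X: "compact (UNIV :: 'a set)"
    and doubling_X: "doubling_metric_space TYPE('a)"
    and diam_X: "diameter (UNIV :: 'a set) = 1/2"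
    and params: "6 \<le> lam" "lam \<le> a"
    and filling: "hyperbolic_filling a x0 Xs par"
    and p_pos: "0 < p"
    and H1: "0 < eta_m" "eta_p < 1"
       "\<forall>v\<in>vertices Xs. eta_m \<le> rho v \<and> rho v \<le> eta_p"
    and H2: "K0 \<ge> 1"
       "\<forall>v w. hadj a lam Xs v w \<longrightarrow> piw rho par v \<le> K0 * piw rho par w"
    and H4: "\<forall>m n v. v \<in> level Xs m \<longrightarrow> m < n \<longrightarrow>
       (\<Sum>w\<in>descendants Xs par n v. piw rho par w powr p) \<le> piw rho par v powr p"
    and C_ge: "C \<ge> eta_m powr (- p)"
    and mu0: "mu 0 (x0, 0) = 1"
    and pmf: "\<forall>k. (\<forall>v\<in>level Xs k. mu k v \<ge> 0) \<and> (\<Sum>v\<in>level Xs k. mu k v) = 1"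
    and compat: "\<forall>k. compatible Xs par rho p C k (mu k) (mu (Suc k))"
    and bal: "\<forall>k. balanced a lam Xs par rho p C (Suc k) (mu (Suc k))"
    and coupling: "\<forall>k. \<exists>P :: ('a \<times> 'a) measure. prob_space P \<and> sets P = sets borel \<and>
         distr P borel fst = push_measure Xs k (mu k) \<and>
         distr P borel snd = push_measure Xs (Suc k) (mu (Suc k)) \<and>
         emeasure P {(x1, x2). dist x1 x2 \<ge> (1 + 2 * lam / a) * a powr (- real k)} = 0"
    and subseq: "strict_mono r"
    and limit: "weak_limit M (\<lambda>j. push_measure Xs (r j) (mu (r j)))"
  shows "doubling_measure M"
proof -
  have a6: "a \<ge> 6" using params by linarith
  have a0: "a > 0" using a6 by simp
  have s1: "\<forall>k. (\<Sum>v\<in>level Xs k. mu k v) = 1" using pmf by blast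
  have fin: "\<forall>k. finite (level Xs k)"
  proof
    fix k show "finite (level Xs k)" using s1 by (metis sum.infinite zero_neq_one)
  qed
  have nn: "\<forall>k. \<forall>v\<in>level Xs k. mu k v \<ge> 0" using pmf by blast
  have x0v: "(x0, 0) \<in> vertices Xs" using level0[OF filling] level_vertices by blast
  have em1: "eta_m < 1" using H1(2) H1(3) x0v by force
  define e where "e = eta_m powr p"
  have e0: "e > 0" unfolding e_def using H1(1) by simp
  have e1: "e \<le> 1" unfolding e_def using H1(1) em1 p_pos by (intro powr_le1) auto
  have C1: "C \<ge> 1"
  proof -
    have "eta_m powr (- p) = 1 / e" unfolding e_def by (simp add: powr_minus divide_inverse)
    moreover have "1 / e \<ge> 1" using e0 e1 by simp
    ultimately show ?thesis using C_ge by linarith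
  qed
  have vb: "\<forall>k v. v \<in> level Xs (Suc k) \<longrightarrow> e * mu k (par v) \<le> mu (Suc k) v \<and> mu (Suc k) v \<le> C * mu k (par v)"
    unfolding e_def using vert_bounds[OF filling H1(1) H1(2) H1(3) p_pos C_ge] compat by blast
  define H where "H = max 1 (C^2 * K0 powr p)"
  have H1': "H \<ge> 1" unfolding H_def by simp
  have hb: "\<forall>k u v. u \<in> level Xs (Suc k) \<longrightarrow> v \<in> level Xs (Suc k) \<longrightarrow> hadj a lam Xs v u \<longrightarrow>
                mu (Suc k) v \<le> H * mu (Suc k) u"
  proof (intro allI impI)
    fix k u v assume u: "u \<in> level Xs (Suc k)" and v: "v \<in> level Xs (Suc k)" and h: "hadj a lam Xs v u"
    have "mu (Suc k) v \<le> C^2 * K0 powr p * mu (Suc k) u"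
      using horiz_bound[OF filling H1(1) H1(3) p_pos H2(2) _ v u h] bal by blast
    also have "\<dots> \<le> H * mu (Suc k) u" unfolding H_def using nn u by (intro mult_right_mono) auto
    finally show "mu (Suc k) v \<le> H * mu (Suc k) u" .
  qed
  define R where "R = 30 * a + 4"
  have R0: "R > 0" unfolding R_def using a0 by simp
  obtain C2 where C2: "C2 \<ge> 0" "\<forall>n u v. u \<in> level Xs n \<longrightarrow> v \<in> level Xs n \<longrightarrow>
            dist (fst u) (fst v) < (R + 1) * (1/a)^n \<longrightarrow> mu n v \<le> C2 * mu n u"
    using compare_level[OF filling a6 params(1) vb C1 e0 e1 H1' hb nn, of "R + 1"] R0 by auto
  obtain C1' where C1': "C1' \<ge> 0" "\<forall>n (x::'a). nuL (level Xs n) (mu n) (ball x (R * (1/a)^n)) \<le> C1' * nuL (level Xs n) (mu n) (ball x ((1/a)^n))"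
    using key_level[OF doubling_X filling a6 R0 fin nn C2(1) C2(2)] by blast
  have step: "\<forall>k (x::'a) s. nuL (level Xs k) (mu k) (ball x s) \<le> nuL (level Xs (Suc k)) (mu (Suc k)) (ball x (s + 3 * (1/a)^k)) \<and>
        nuL (level Xs (Suc k)) (mu (Suc k)) (ball x s) \<le> nuL (level Xs k) (mu k) (ball x (s + 3 * (1/a)^k))"
  proof (intro allI)
    fix k and x :: 'a and s
    obtain P :: "('a \<times> 'a) measure" where P: "prob_space P" "sets P = sets borel"
         "distr P borel fst = push_measure Xs k (mu k)"
         "distr P borel snd = push_measure Xs (Suc k) (mu (Suc k))"
         "emeasure P {(x1, x2). dist x1 x2 \<ge> (1 + 2 * lam / a) * a powr (- real k)} = 0"
      using coupling by blast
    define c where "c = (1 + 2 * lam / a) * a powr (- real k)"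
    have cle: "c \<le> 3 * (1/a)^k"
    proof -
      have "lam / a \<le> 1" using params a0 by simp
      then have "1 + 2 * lam / a \<le> 3" by simp
      then show ?thesis unfolding c_def powr_to_pow[OF a0] by (intro mult_right_mono) (use a0 in auto)
    qed
    have mono: "nuL (level Xs j) (mu j) (ball x r1) \<le> nuL (level Xs j) (mu j) (ball x r2)" if "r1 \<le> r2" for j r1 r2
      by (rule nuL_mono) (use fin nn that in auto)
    have cs: "nuL (level Xs k) (mu k) (ball x s) \<le> nuL (level Xs (Suc k)) (mu (Suc k)) (ball x (s + c))"
      "nuL (level Xs (Suc k)) (mu (Suc k)) (ball x s) \<le> nuL (level Xs k) (mu k) (ball x (s + c))"
      using coupling_step[OF P(1) P(2) P(3) P(4) P(5)[folded c_def] fin[rule_format, of k] fin[rule_format, of "Suc k"]]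
        nn by blast+
    show "nuL (level Xs k) (mu k) (ball x s) \<le> nuL (level Xs (Suc k)) (mu (Suc k)) (ball x (s + 3 * (1/a)^k)) \<and>
        nuL (level Xs (Suc k)) (mu (Suc k)) (ball x s) \<le> nuL (level Xs k) (mu k) (ball x (s + 3 * (1/a)^k))"
    proof -
      have le: "s + c \<le> s + 3 * (1/a)^k" using cle by simp
      show ?thesis using order_trans[OF cs(1) mono[OF le, of "Suc k"]] order_trans[OF cs(2) mono[OF le, of k]] by blast
    qed
  qed
  have bUNIV: "bounded (UNIV :: 'a set)" using compact_X by (rule compact_imp_bounded)
  have diam: "\<forall>x y::'a. dist x y \<le> 1/2"
    using diameter_bounded_bound[OF bUNIV] diam_X by auto
  define CD where "CD = max 1 C1'"
  have CD0: "CD \<ge> 0" unfolding CD_def by simp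
  have lev: "\<exists>K. \<forall>k\<ge>K. nuL (level Xs k) (mu k) (ball x (3 * r)) \<le> CD * nuL (level Xs k) (mu k) (ball x (r / 2))"
    if "r > 0" for x :: 'a and r
    unfolding CD_def by (rule level_doubling[OF a6 step fin nn s1 diam C1'(1) C1'(2)[unfolded R_def] that])
  have sM: "sets M = sets borel" and fM: "finite_measure M" using limit unfolding weak_limit_def by auto
  have spM: "space M = UNIV" using sets_eq_imp_space_eq[OF sM] by simp
  have lim: "(\<lambda>j. (\<Sum>v\<in>level Xs (r j). mu (r j) v * g (fst v))) \<longlonglongrightarrow> integral\<^sup>L M g"
    if g: "continuous_on UNIV g" for g :: "'a \<Rightarrow> real"
  proof -
    have "(\<lambda>j. integral\<^sup>L (push_measure Xs (r j) (mu (r j))) g) \<longlonglongrightarrow> integral\<^sup>L M g"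
      using limit g unfolding weak_limit_def by blast
    moreover have "integral\<^sup>L (push_measure Xs (r j) (mu (r j))) g = (\<Sum>v\<in>level Xs (r j). mu (r j) v * g (fst v))" for j
      using push_integral[OF fin[THEN spec[of _ "r j"]] nn[THEN spec[of _ "r j"]] borel_measurable_continuous_onI[OF g]] .
    ultimately show ?thesis by simp
  qed
  have intM: "integrable M g" if g: "continuous_on UNIV g" and gb: "\<forall>y. \<bar>g y\<bar> \<le> 1" for g :: "'a \<Rightarrow> real"
  proof (rule finite_measure.integrable_const_bound[OF fM])
    show "AE x in M. norm (g x) \<le> 1" using gb by simp
    show "g \<in> borel_measurable M" unfolding measurable_cong_sets[OF sM refl]
      by (rule borel_measurable_continuous_onI[OF g])
  qed
  have ball_sets: "ball y t \<in> sets M" for y :: 'a and t unfolding sM by simp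
  have indM: "integrable M (indicator (ball y t) :: 'a \<Rightarrow> real)" for y t
    by (rule integrable_real_indicator[OF ball_sets]) (use finite_measure.emeasure_finite[OF fM] in \<open>simp add: less_top\<close>)
  have meas_int: "measure M (ball y t) = integral\<^sup>L M (indicator (ball y t))" for y t
    by (simp add: integral_indicator spM)
  have "(\<lambda>j. (\<Sum>v\<in>level Xs (r j). mu (r j) v * 1)) \<longlonglongrightarrow> integral\<^sup>L M (\<lambda>_. 1)"
    using lim[of "\<lambda>_. 1"] by simp
  moreover have "(\<lambda>j. (\<Sum>v\<in>level Xs (r j). mu (r j) v * 1)) = (\<lambda>_. 1)" using s1 by simp
  ultimately have "integral\<^sup>L M (\<lambda>_. (1::real)) = 1" using LIMSEQ_unique tendsto_const by metis
  then have mspace: "measure M (space M) = 1" by simp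
  have nz: "emeasure M (space M) \<noteq> 0"
  proof
    assume "emeasure M (space M) = 0"
    then have "measure M (space M) = 0" by (simp add: measure_def)
    then show False using mspace by simp
  qed
  have dbl: "measure M (ball x (2 * rr)) \<le> CD * measure M (ball x rr)" if r0: "rr > 0" for x :: 'a and rr
  proof -
    define phi where "phi y = max 0 (min 1 (3 - dist x y / rr))" for y
    define psi where "psi y = max 0 (min 1 (2 - 2 * dist x y / rr))" for y
    have cphi: "continuous_on UNIV phi" unfolding phi_def by (intro continuous_intros) (use r0 in auto)
    have cpsi: "continuous_on UNIV psi" unfolding psi_def by (intro continuous_intros) (use r0 in auto)
    have bphi: "\<forall>y. \<bar>phi y\<bar> \<le> 1" and bpsi: "\<forall>y. \<bar>psi y\<bar> \<le> 1" unfolding phi_def psi_def by auto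
    have le1: "measure M (ball x (2 * rr)) \<le> integral\<^sup>L M phi"
      unfolding meas_int
    proof (rule integral_mono[OF indM intM[OF cphi bphi]])
      fix y show "indicator (ball x (2 * rr)) y \<le> phi y"
        using r0 by (auto simp: indicator_def phi_def field_simps)
    qed
    have le2: "integral\<^sup>L M psi \<le> measure M (ball x rr)"
      unfolding meas_int
    proof (rule integral_mono[OF intM[OF cpsi bpsi] indM])
      fix y show "psi y \<le> indicator (ball x rr) y"
        using r0 by (auto simp: indicator_def psi_def field_simps)
    qed
    obtain K where K: "\<forall>k\<ge>K. nuL (level Xs k) (mu k) (ball x (3 * rr)) \<le> CD * nuL (level Xs k) (mu k) (ball x (rr / 2))"
      using lev[OF r0] by blast
    have ev: "\<forall>j\<ge>K. (\<Sum>v\<in>level Xs (r j). mu (r j) v * phi (fst v)) \<le> CD * (\<Sum>v\<in>level Xs (r j). mu (r j) v * psi (fst v))"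
    proof (intro allI impI)
      fix j assume j: "j \<ge> K"
      define k where "k = r j"
      have kK: "k \<ge> K" unfolding k_def using seq_suble[OF subseq, of j] j by simp
      have A: "(\<Sum>v\<in>level Xs k. mu k v * phi (fst v)) \<le> nuL (level Xs k) (mu k) (ball x (3 * rr))"
        unfolding nuL_filter[OF fin[rule_format]]
      proof (rule sum_mono)
        fix v assume v: "v \<in> level Xs k"
        have "mu k v \<ge> 0" using nn v by blast
        have p1: "phi (fst v) \<le> 1" unfolding phi_def by simp
        have p0: "fst v \<notin> ball x (3 * rr) \<Longrightarrow> phi (fst v) = 0"
          using r0 by (auto simp: phi_def field_simps)
        show "mu k v * phi (fst v) \<le> (if fst v \<in> ball x (3 * rr) then mu k v else 0)"
          using p0 mult_left_mono[OF p1 \<open>mu k v \<ge> 0\<close>] by auto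
      qed
      have B: "nuL (level Xs k) (mu k) (ball x (rr / 2)) \<le> (\<Sum>v\<in>level Xs k. mu k v * psi (fst v))"
        unfolding nuL_filter[OF fin[rule_format]]
      proof (rule sum_mono)
        fix v assume v: "v \<in> level Xs k"
        have "mu k v \<ge> 0" using nn v by blast
        then show "(if fst v \<in> ball x (rr / 2) then mu k v else 0) \<le> mu k v * psi (fst v)"
          using r0 by (auto simp: psi_def field_simps)
      qed
      have "(\<Sum>v\<in>level Xs k. mu k v * phi (fst v)) \<le> CD * (\<Sum>v\<in>level Xs k. mu k v * psi (fst v))"
        using A K[rule_format, OF kK] mult_left_mono[OF B CD0] by linarith
      then show "(\<Sum>v\<in>level Xs (r j). mu (r j) v * phi (fst v)) \<le> CD * (\<Sum>v\<in>level Xs (r j). mu (r j) v * psi (fst v))"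
        unfolding k_def .
    qed
    have "integral\<^sup>L M phi \<le> CD * integral\<^sup>L M psi"
      by (rule LIMSEQ_le[OF lim[OF cphi] tendsto_mult_left[OF lim[OF cpsi]]]) (use ev in blast)
    then show ?thesis using le1 le2 mult_left_mono[OF le2 CD0] by linarith
  qed
  show ?thesis unfolding doubling_measure_def using nz dbl by blast
qed

end
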